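(* Let $H$ be an $m\times n$ binary parity-check matrix with Tanner graph $G$, and let $\underline x$ be a point of the fundamental polytope of $H$. Let $T\subseteq\{1,\dots,m\}$ be a collection of check nodes. If $T$ is a cut-generating collection at $\underline x$, then there exists a fractional cycle at $\underline x$ (a cycle in the fractional subgraph $F$) all of whose check nodes belong to $T$.
   Context: The Tanner graph $G$ of $H$ is the bipartite graph with variable nodes $1,\dots,n$, check nodes $1,\dots,m$, and an edge between check $j$ and variable $i$ iff $H_{ji}=1$; $N(j)$ is the set of variable nodes adjacent to check $j$. The fundamental polytope is the set of $\underline x\in[0,1]^n$ such that for every $j$ and every odd-sized $V\subseteq N(j)$, $\sum_{i\in V}x_i-\sum_{i\in N(j)\setminus V}x_i\le |V|-1$. For a parity check (binary vector) with neighborhood $N$, its constraints are $\sum_{i\in V}x_i-\sum_{i\in N\setminus V}x_i\le |V|-1$ for odd $V\subseteq N$, and it generates a cut at $\underline x$ if one of them is violated at $\underline x$. A set $T$ of check nodes is a cut-generating collection at $\underline x$ if the redundant parity check obtained as the modulo-2 sum of the rows of $H$ indexed by $T$ generates a cut at $\underline x$. The fractional subgraph $F$ at $\underline x$ is the subgraph of $G$ consisting of the variable nodes $i$ with $0<x_i<1$, the check nodes adjacent to them, and all edges between these nodes; a fractional cycle is a cycle in $F$. *)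

theory Defs
  imports Complex_Main
begin

text \<open>A binary m x n parity-check matrix H is represented as H :: nat => nat => bool,
  H j i meaning H_{ji} = 1, with check indices j < m and variable indices i < n
  (0-based). Points x are functions nat => real (only x 0..x (n-1) matter).\<close>

definition tanner_edge :: "(nat \<Rightarrow> nat \<Rightarrow> bool) \<Rightarrow> nat \<Rightarrow> nat \<Rightarrow> nat \<Rightarrow> nat \<Rightarrow> bool" where
  "tanner_edge H m n j i \<longleftrightarrow> j < m \<and> i < n \<and> H j i"

definition check_nbhd :: "(nat \<Rightarrow> nat \<Rightarrow> bool) \<Rightarrow> nat \<Rightarrow> nat \<Rightarrow> nat \<Rightarrow> nat set" where
  "check_nbhd H m n j = {i. tanner_edge H m n j i}"

definition parity_constraints_hold :: "nat set \<Rightarrow> (nat \<Rightarrow> real) \<Rightarrow> bool" where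
  "parity_constraints_hold N x \<longleftrightarrow>
     (\<forall>V. V \<subseteq> N \<and> odd (card V) \<longrightarrow>
        (\<Sum>i\<in>V. x i) - (\<Sum>i\<in>N - V. x i) \<le> real (card V) - 1)"

definition generates_cut :: "nat set \<Rightarrow> (nat \<Rightarrow> real) \<Rightarrow> bool" where
  "generates_cut N x \<longleftrightarrow>
     (\<exists>V. V \<subseteq> N \<and> odd (card V) \<and>
        (\<Sum>i\<in>V. x i) - (\<Sum>i\<in>N - V. x i) > real (card V) - 1)"

definition fundamental_polytope :: "(nat \<Rightarrow> nat \<Rightarrow> bool) \<Rightarrow> nat \<Rightarrow> nat \<Rightarrow> (nat \<Rightarrow> real) \<Rightarrow> bool" where
  "fundamental_polytope H m n x \<longleftrightarrow>
     (\<forall>i<n. 0 \<le> x i \<and> x i \<le> 1) \<and>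
     (\<forall>j<m. parity_constraints_hold (check_nbhd H m n j) x)"

text \<open>Neighbourhood of the redundant parity check obtained as the mod-2 sum of the rows in T:
  variable i is in it iff an odd number of rows j in T have H_{ji} = 1.\<close>
definition redundant_nbhd :: "(nat \<Rightarrow> nat \<Rightarrow> bool) \<Rightarrow> nat \<Rightarrow> nat \<Rightarrow> nat set \<Rightarrow> nat set" where
  "redundant_nbhd H m n T = {i. i < n \<and> odd (card {j \<in> T. tanner_edge H m n j i})}"

definition cut_generating_collection :: "(nat \<Rightarrow> nat \<Rightarrow> bool) \<Rightarrow> nat \<Rightarrow> nat \<Rightarrow> (nat \<Rightarrow> real) \<Rightarrow> nat set \<Rightarrow> bool" where
  "cut_generating_collection H m n x T \<longleftrightarrow> generates_cut (redundant_nbhd H m n T) x"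

definition fractional_var :: "nat \<Rightarrow> (nat \<Rightarrow> real) \<Rightarrow> nat \<Rightarrow> bool" where
  "fractional_var n x i \<longleftrightarrow> i < n \<and> 0 < x i \<and> x i < 1"

text \<open>A cycle in the fractional subgraph F: since the Tanner graph is bipartite, a cycle is
  c_0 - v_0 - c_1 - v_1 - ... - c_(k-1) - v_(k-1) - c_0 with k >= 2, distinct check nodes c_t,
  distinct variable nodes v_t, all of them in F (the variables fractional; check nodes are then
  in F since they are adjacent to a fractional variable), and all edges Tanner-graph edges.\<close>
definition fractional_cycle :: "(nat \<Rightarrow> nat \<Rightarrow> bool) \<Rightarrow> nat \<Rightarrow> nat \<Rightarrow> (nat \<Rightarrow> real)
    \<Rightarrow> nat list \<Rightarrow> nat list \<Rightarrow> bool" where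
  "fractional_cycle H m n x cs vs \<longleftrightarrow>
     length cs = length vs \<and> length cs \<ge> 2 \<and> distinct cs \<and> distinct vs \<and>
     (\<forall>t < length cs.
        fractional_var n x (vs ! t) \<and>
        tanner_edge H m n (cs ! t) (vs ! t) \<and>
        tanner_edge H m n (cs ! ((t + 1) mod length cs)) (vs ! t))"

end

theory Submission
  imports Defs
begin

definition dd :: "nat set \<Rightarrow> nat set \<Rightarrow> (nat \<Rightarrow> real) \<Rightarrow> real" where
  "dd N V x = (\<Sum>i\<in>N. if i \<in> V then 1 - x i else x i)"

lemma dd_split:
  assumes "finite N" "V \<subseteq> N"
  shows "dd N V x = real (card V) - (\<Sum>i\<in>V. x i) + (\<Sum>i\<in>N - V. x i)"
proof -
  have "dd N V x = (\<Sum>i\<in>N - V. if i \<in> V then 1 - x i else x i) + (\<Sum>i\<in>V. if i \<in> V then 1 - x i else x i)"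
    unfolding dd_def using assms by (simp add: sum.subset_diff)
  also have "(\<Sum>i\<in>N - V. if i \<in> V then 1 - x i else x i) = (\<Sum>i\<in>N - V. x i)"
    by (rule sum.cong) auto
  also have "(\<Sum>i\<in>V. if i \<in> V then 1 - x i else x i) = (\<Sum>i\<in>V. 1 - x i)"
    by (rule sum.cong) auto
  also have "\<dots> = real (card V) - (\<Sum>i\<in>V. x i)"
    by (simp add: sum_subtractf)
  finally show ?thesis by simp
qed

lemma pc_iff:
  assumes "finite N"
  shows "parity_constraints_hold N x \<longleftrightarrow> (\<forall>V. V \<subseteq> N \<and> odd (card V) \<longrightarrow> 1 \<le> dd N V x)"
  unfolding parity_constraints_hold_def
  using dd_split[OF assms] by (smt (verit))

lemma dd_nonneg:
  assumes "\<forall>i\<in>N. 0 \<le> x i \<and> x i \<le> 1"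
  shows "0 \<le> dd N V x"
  unfolding dd_def using assms by (intro sum_nonneg) auto

lemma combine:
  fixes A B :: "nat set"
  assumes fA: "finite A" and fB: "finite B"
    and bnd: "\<forall>i\<in>A \<union> B. 0 \<le> x i \<and> x i \<le> 1"
    and pA: "parity_constraints_hold A x" and pB: "parity_constraints_hold B x"
    and frac1: "\<forall>u w. u \<in> A \<inter> B \<longrightarrow> w \<in> A \<inter> B \<longrightarrow> 0 < x u \<longrightarrow> x u < 1 \<longrightarrow> 0 < x w \<longrightarrow> x w < 1 \<longrightarrow> u = w"
  shows "parity_constraints_hold ((A - B) \<union> (B - A)) x"
proof -
  let ?D = "(A - B) \<union> (B - A)"
  let ?C = "A \<inter> B"
  have fD: "finite ?D" using fA fB by auto
  have fC: "finite ?C" using fA by auto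
  have dA: "\<forall>V. V \<subseteq> A \<and> odd (card V) \<longrightarrow> 1 \<le> dd A V x" using pA pc_iff[OF fA] by blast
  have dB: "\<forall>V. V \<subseteq> B \<and> odd (card V) \<longrightarrow> 1 \<le> dd B V x" using pB pc_iff[OF fB] by blast
  have "1 \<le> dd ?D V x" if V: "V \<subseteq> ?D" "odd (card V)" for V
  proof -
    define a where "a = dd (A - B) V x"
    define b where "b = dd (B - A) V x"
    have a0: "0 \<le> a" unfolding a_def using bnd by (intro dd_nonneg) auto
    have b0: "0 \<le> b" unfolding b_def using bnd by (intro dd_nonneg) auto
    have "dd ?D V x = a + b" unfolding a_def b_def dd_def
      by (rule sum.union_disjoint) (use fA fB in auto)
    have keyA: "dd A (V \<inter> A \<union> W) x = a + dd ?C W x" if W: "W \<subseteq> ?C" for W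
    proof -
      have "A = (A - B) \<union> ?C" by auto
      then have "dd A (V \<inter> A \<union> W) x = dd (A - B) (V \<inter> A \<union> W) x + dd ?C (V \<inter> A \<union> W) x"
        unfolding dd_def by (metis (no_types, lifting) Diff_disjoint fA finite_Diff finite_Int inf_commute inf_sup_absorb sum.union_disjoint Int_Diff_disjoint)
      moreover have "dd (A - B) (V \<inter> A \<union> W) x = a" unfolding a_def dd_def
        by (rule sum.cong) (use W in auto)
      moreover have "dd ?C (V \<inter> A \<union> W) x = dd ?C W x" unfolding dd_def
        by (rule sum.cong) (use V in auto)
      ultimately show ?thesis by simp
    qed
    have keyB: "dd B (V \<inter> B \<union> W) x = b + dd ?C W x" if W: "W \<subseteq> ?C" for W
    proof -
      have "B = (B - A) \<union> ?C" by auto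
      then have "dd B (V \<inter> B \<union> W) x = dd (B - A) (V \<inter> B \<union> W) x + dd ?C (V \<inter> B \<union> W) x"
        unfolding dd_def by (metis (no_types, lifting) Diff_disjoint fB finite_Diff finite_Int inf_commute inf_sup_absorb sum.union_disjoint Int_Diff_disjoint)
      moreover have "dd (B - A) (V \<inter> B \<union> W) x = b" unfolding b_def dd_def
        by (rule sum.cong) (use W in auto)
      moreover have "dd ?C (V \<inter> B \<union> W) x = dd ?C W x" unfolding dd_def
        by (rule sum.cong) (use V in auto)
      ultimately show ?thesis by simp
    qed
    have fV: "finite V" using V fD finite_subset by blast
    have cA: "card (V \<inter> A \<union> W) = card (V \<inter> A) + card W" if "W \<subseteq> ?C" for W
      using that V fV fC fA by (subst card_Un_disjoint) (auto intro: finite_subset)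
    have cB: "card (V \<inter> B \<union> W) = card (V \<inter> B) + card W" if "W \<subseteq> ?C" for W
      using that V fV fC fA by (subst card_Un_disjoint) (auto intro: finite_subset)
    have cV: "card (V \<inter> A) + card (V \<inter> B) = card V"
    proof -
      have "V = (V \<inter> A) \<union> (V \<inter> B)" using V by auto
      moreover have "(V \<inter> A) \<inter> (V \<inter> B) = {}" using V by auto
      ultimately show ?thesis using fV by (metis card_Un_disjoint finite_Int)
    qed
    define W0 where "W0 = {i \<in> ?C. x i = 1}"
    have W0C: "W0 \<subseteq> ?C" unfolding W0_def by auto
    show ?thesis
    proof (cases "\<exists>c\<in>?C. 0 < x c \<and> x c < 1")
      case False
      have "dd ?C W0 x = 0" unfolding dd_def W0_def
      proof (rule sum.neutral, intro ballI)
        fix i assume i: "i \<in> ?C"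
        then have "x i = 0 \<or> x i = 1" using False bnd by force
        then show "(if i \<in> {i \<in> ?C. x i = 1} then 1 - x i else x i) = 0" using i by auto
      qed
      show ?thesis
      proof (cases "odd (card (V \<inter> A) + card W0)")
        case True
        then have "1 \<le> dd A (V \<inter> A \<union> W0) x" using dA cA[OF W0C] W0C by auto
        then show ?thesis using keyA[OF W0C] \<open>dd ?C W0 x = 0\<close> \<open>dd ?D V x = a + b\<close> b0 by simp
      next
        case False
        then have "odd (card (V \<inter> B) + card W0)" using cV V(2) by presburger
        then have "1 \<le> dd B (V \<inter> B \<union> W0) x" using dB cB[OF W0C] W0C by auto
        then show ?thesis using keyB[OF W0C] \<open>dd ?C W0 x = 0\<close> \<open>dd ?D V x = a + b\<close> a0 by simp
      qed
    next
      case True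
      then obtain c where c: "c \<in> ?C" "0 < x c" "x c < 1" by blast
      have oth: "x i = 0 \<or> x i = 1" if "i \<in> ?C" "i \<noteq> c" for i
      proof (rule ccontr)
        assume "\<not> (x i = 0 \<or> x i = 1)"
        moreover have "0 \<le> x i \<and> x i \<le> 1" using bnd that by blast
        ultimately have "0 < x i" "x i < 1" by auto
        then show False using frac1 c that by blast
      qed
      define W1 where "W1 = insert c W0"
      have W1C: "W1 \<subseteq> ?C" unfolding W1_def using W0C c by auto
      have cW0: "c \<notin> W0" unfolding W0_def using c by auto
      have cW1: "card W1 = card W0 + 1" proof -
        have "finite W0" using fC W0C finite_subset by blast
        then show ?thesis unfolding W1_def using cW0 by simp
      qed
      have s0: "dd ?C W0 x = x c"
      proof -
        have "dd ?C W0 x = (if c \<in> W0 then 1 - x c else x c) + (\<Sum>i\<in>?C - {c}. if i \<in> W0 then 1 - x i else x i)"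
          unfolding dd_def using c fC by (simp add: sum.remove)
        also have "(\<Sum>i\<in>?C - {c}. if i \<in> W0 then 1 - x i else x i) = 0"
          using oth unfolding W0_def by (intro sum.neutral) force
        finally show ?thesis using cW0 by simp
      qed
      have s1: "dd ?C W1 x = 1 - x c"
      proof -
        have "dd ?C W1 x = (if c \<in> W1 then 1 - x c else x c) + (\<Sum>i\<in>?C - {c}. if i \<in> W1 then 1 - x i else x i)"
          unfolding dd_def using c fC by (simp add: sum.remove)
        also have "(\<Sum>i\<in>?C - {c}. if i \<in> W1 then 1 - x i else x i) = 0"
          unfolding W1_def W0_def
        proof (intro sum.neutral ballI)
          fix i assume i: "i \<in> ?C - {c}"
          then have "x i = 0 \<or> x i = 1" using oth by blast
          then show "(if i \<in> insert c {i \<in> ?C. x i = 1} then 1 - x i else x i) = 0" using i by auto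
        qed
        finally show ?thesis unfolding W1_def by simp
      qed
      show ?thesis
      proof (cases "odd (card (V \<inter> A) + card W0)")
        case True
        then have "1 \<le> dd A (V \<inter> A \<union> W0) x" using dA cA[OF W0C] W0C by auto
        moreover have "odd (card (V \<inter> B) + card W1)" using True cV V(2) cW1 by presburger
        then have "1 \<le> dd B (V \<inter> B \<union> W1) x" using dB cB[OF W1C] W1C by auto
        ultimately show ?thesis using keyA[OF W0C] keyB[OF W1C] s0 s1 \<open>dd ?D V x = a + b\<close> by simp
      next
        case False
        then have "odd (card (V \<inter> A) + card W1)" using cW1 by presburger
        then have "1 \<le> dd A (V \<inter> A \<union> W1) x" using dA cA[OF W1C] W1C by auto
        moreover have "odd (card (V \<inter> B) + card W0)" using False cV V(2) by presburger
        then have "1 \<le> dd B (V \<inter> B \<union> W0) x" using dB cB[OF W0C] W0C by auto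
        ultimately show ?thesis using keyA[OF W1C] keyB[OF W0C] s0 s1 \<open>dd ?D V x = a + b\<close> by simp
      qed
    qed
  qed
  then show ?thesis using pc_iff[OF fD] by blast
qed

definition Sfr :: "(nat \<Rightarrow> nat \<Rightarrow> bool) \<Rightarrow> nat \<Rightarrow> nat \<Rightarrow> (nat \<Rightarrow> real) \<Rightarrow> nat set \<Rightarrow> nat \<Rightarrow> nat \<Rightarrow> bool" where
  "Sfr H m n x T j v \<longleftrightarrow> fractional_var n x v \<and> tanner_edge H m n j v \<and> (\<exists>j'\<in>T. j' \<noteq> j \<and> tanner_edge H m n j' v)"

lemma rn_insert:
  assumes "finite T" "j \<notin> T"
  shows "redundant_nbhd H m n (insert j T) =
    (check_nbhd H m n j - redundant_nbhd H m n T) \<union> (redundant_nbhd H m n T - check_nbhd H m n j)"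
proof -
  have "i \<in> redundant_nbhd H m n (insert j T) \<longleftrightarrow>
     i \<in> (check_nbhd H m n j - redundant_nbhd H m n T) \<union> (redundant_nbhd H m n T - check_nbhd H m n j)" for i
  proof (cases "tanner_edge H m n j i")
    case True
    then have "{j' \<in> insert j T. tanner_edge H m n j' i} = insert j {j' \<in> T. tanner_edge H m n j' i}" by auto
    moreover have "card (insert j {j' \<in> T. tanner_edge H m n j' i}) = Suc (card {j' \<in> T. tanner_edge H m n j' i})"
      using assms by simp
    moreover have "i < n" using True unfolding tanner_edge_def by simp
    ultimately show ?thesis using True unfolding redundant_nbhd_def check_nbhd_def by auto
  next
    case False
    then have "{j' \<in> insert j T. tanner_edge H m n j' i} = {j' \<in> T. tanner_edge H m n j' i}" by auto
    then show ?thesis using False unfolding redundant_nbhd_def check_nbhd_def by auto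
  qed
  then show ?thesis by blast
qed

lemma rn_sub: "redundant_nbhd H m n T \<subseteq> {..<n}"
  unfolding redundant_nbhd_def by auto

lemma cn_sub: "check_nbhd H m n j \<subseteq> {..<n}"
  unfolding check_nbhd_def tanner_edge_def by auto

lemma main:
  assumes fp: "fundamental_polytope H m n x"
    and fT: "finite T" and Tm: "T \<subseteq> {..<m}"
    and leaf: "\<forall>T'. T' \<subseteq> T \<longrightarrow> T' \<noteq> {} \<longrightarrow> (\<exists>j\<in>T'. \<forall>u w. Sfr H m n x T' j u \<and> Sfr H m n x T' j w \<longrightarrow> u = w)"
  shows "parity_constraints_hold (redundant_nbhd H m n T) x"
  using fT Tm leaf
proof (induction T rule: finite_psubset_induct)
  case (psubset T)
  show ?case
  proof (cases "T = {}")
    case True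
    then have "redundant_nbhd H m n T = {}" unfolding redundant_nbhd_def by simp
    then show ?thesis unfolding parity_constraints_hold_def by simp
  next
    case False
    then obtain j where j: "j \<in> T" and lf: "\<forall>u w. Sfr H m n x T j u \<and> Sfr H m n x T j w \<longrightarrow> u = w"
      using psubset.prems(2) by blast
    define T' where "T' = T - {j}"
    have T'T: "T' \<subset> T" using j unfolding T'_def by auto
    have IH: "parity_constraints_hold (redundant_nbhd H m n T') x"
      using psubset.IH[OF T'T] psubset.prems T'T by blast
    have TT': "T = insert j T'" using j unfolding T'_def by auto
    have fT': "finite T'" using psubset.hyps T'T finite_subset by blast
    have eq: "redundant_nbhd H m n T = (check_nbhd H m n j - redundant_nbhd H m n T') \<union> (redundant_nbhd H m n T' - check_nbhd H m n j)"
      using rn_insert[OF fT', of j H m n] TT' unfolding T'_def by simp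
    have jm: "j < m" using j psubset.prems(1) by auto
    have pA: "parity_constraints_hold (check_nbhd H m n j) x"
      using fp jm unfolding fundamental_polytope_def by blast
    have fA: "finite (check_nbhd H m n j)" by (rule finite_subset[OF cn_sub]) simp
    have fB: "finite (redundant_nbhd H m n T')" by (rule finite_subset[OF rn_sub]) simp
    have bnd: "\<forall>i\<in>check_nbhd H m n j \<union> redundant_nbhd H m n T'. 0 \<le> x i \<and> x i \<le> 1"
      proof
      fix i assume "i \<in> check_nbhd H m n j \<union> redundant_nbhd H m n T'"
      then have "i < n" using cn_sub rn_sub by blast
      then show "0 \<le> x i \<and> x i \<le> 1" using fp unfolding fundamental_polytope_def by blast
    qed
    have frac1: "\<forall>u w. u \<in> check_nbhd H m n j \<inter> redundant_nbhd H m n T' \<longrightarrow> w \<in> check_nbhd H m n j \<inter> redundant_nbhd H m n T' \<longrightarrow> 0 < x u \<longrightarrow> x u < 1 \<longrightarrow> 0 < x w \<longrightarrow> x w < 1 \<longrightarrow> u = w"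
    proof (intro allI impI)
      fix u w
      have S: "Sfr H m n x T j u" if u: "u \<in> check_nbhd H m n j \<inter> redundant_nbhd H m n T'" "0 < x u" "x u < 1" for u
      proof -
        have "odd (card {j' \<in> T'. tanner_edge H m n j' u})" "u < n"
          using u unfolding redundant_nbhd_def by auto
        then have "{j' \<in> T'. tanner_edge H m n j' u} \<noteq> {}" by (metis card.empty odd_card_imp_not_empty)
        then obtain j' where "j' \<in> T'" "tanner_edge H m n j' u" by blast
        moreover have "tanner_edge H m n j u" using u unfolding check_nbhd_def by auto
        ultimately show ?thesis unfolding Sfr_def fractional_var_def T'_def using u \<open>u < n\<close> by auto
      qed
      assume "u \<in> check_nbhd H m n j \<inter> redundant_nbhd H m n T'" "w \<in> check_nbhd H m n j \<inter> redundant_nbhd H m n T'"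
        "0 < x u" "x u < 1" "0 < x w" "x w < 1"
      then show "u = w" using S lf by blast
    qed
    show ?thesis using combine[OF fA fB bnd pA IH frac1] eq by simp
  qed
qed

lemma arith_facts:
  fixes i k s L :: nat
  assumes "even i = even k" "i + 4 \<le> k" "s = (i+1) div 2" "L = k div 2 - i div 2"
  shows "2 \<le> L"
    "\<And>t. t < L \<Longrightarrow> i \<le> 2*(s+t) \<and> 2*(s+t) < k"
    "\<And>t. t < L \<Longrightarrow> i < 2*(s+t)+1 \<and> 2*(s+t)+1 \<le> k"
    "even i \<Longrightarrow> s = i div 2 \<and> s + L = k div 2"
    "odd i \<Longrightarrow> s = i div 2 + 1 \<and> s + L - 1 = k div 2"
proof -
  define a where "a = i div 2"
  define b where "b = k div 2"
  define r where "r = i mod 2"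
  have i: "i = 2*a + r" unfolding a_def r_def by simp
  have km: "k mod 2 = r" unfolding r_def using assms(1)
    by (cases "even i") (auto simp: even_iff_mod_2_eq_zero odd_iff_mod_2_eq_one)
  have k: "k = 2*b + r" unfolding b_def using km div_mult_mod_eq[of k 2] by simp
  have r: "r = 0 \<or> r = 1" unfolding r_def by auto
  have ab: "a + 2 \<le> b" using assms(2) i k r by linarith
  have s: "s = a + r" using assms(3) i r by auto
  have L: "L = b - a" using assms(4) unfolding a_def b_def by simp
  show "2 \<le> L" using L ab by arith
  show "i \<le> 2*(s+t) \<and> 2*(s+t) < k" if "t < L" for t using that s L ab i k r by arith
  show "i < 2*(s+t)+1 \<and> 2*(s+t)+1 \<le> k" if "t < L" for t using that s L ab i k r by arith
  show "even i \<Longrightarrow> s = i div 2 \<and> s + L = k div 2"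
  proof -
    assume "even i"
    then have "r = 0" unfolding r_def by auto
    then show ?thesis using s L ab unfolding a_def b_def by auto
  qed
  show "odd i \<Longrightarrow> s = i div 2 + 1 \<and> s + L - 1 = k div 2"
  proof -
    assume "odd i"
    then have "r = 1" unfolding r_def by (simp add: odd_iff_mod_2_eq_one)
    then show ?thesis using s L ab unfolding a_def b_def by auto
  qed
qed

lemma leaf:
  assumes Tne: "T \<noteq> {}" and Tm: "T \<subseteq> {..<m}"
    and nocyc: "\<not> (\<exists>cs vs. fractional_cycle H m n x cs vs \<and> set cs \<subseteq> T)"
  shows "\<exists>j\<in>T. \<forall>u w. Sfr H m n x T j u \<and> Sfr H m n x T j w \<longrightarrow> u = w"
proof (rule ccontr)
  let ?S = "Sfr H m n x T"
  let ?te = "tanner_edge H m n"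
  assume "\<not> ?thesis"
  note nl = this
  have ex2: "\<forall>j\<in>T. \<forall>v. \<exists>v'. ?S j v' \<and> v' \<noteq> v"
  proof (intro ballI allI)
    fix j v assume "j \<in> T"
    then obtain u w where "?S j u" "?S j w" "u \<noteq> w" using nl by blast
    then show "\<exists>v'. ?S j v' \<and> v' \<noteq> v" by (cases "u = v") blast+
  qed
  obtain j0 where j0: "j0 \<in> T" using Tne by blast
  obtain v0 where v0: "?S j0 v0" using ex2 j0 by blast
  define P where "P p \<longleftrightarrow> fst p \<in> T \<and> ?S (fst p) (snd p)" for p
  define nxt where "nxt p = (let c' = SOME c'. c' \<in> T \<and> c' \<noteq> fst p \<and> ?te c' (snd p)
      in (c', SOME v'. ?S c' v' \<and> v' \<noteq> snd p))" for p
  have nxt_prop: "P (nxt p) \<and> fst (nxt p) \<noteq> fst p \<and> snd (nxt p) \<noteq> snd p \<and> ?te (fst (nxt p)) (snd p)"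
    if "P p" for p
  proof -
    define c' where "c' = (SOME c'. c' \<in> T \<and> c' \<noteq> fst p \<and> ?te c' (snd p))"
    have "\<exists>c'. c' \<in> T \<and> c' \<noteq> fst p \<and> ?te c' (snd p)"
      using that unfolding P_def Sfr_def by blast
    then have c': "c' \<in> T \<and> c' \<noteq> fst p \<and> ?te c' (snd p)" unfolding c'_def by (rule someI_ex)
    define v' where "v' = (SOME v'. ?S c' v' \<and> v' \<noteq> snd p)"
    have "\<exists>v'. ?S c' v' \<and> v' \<noteq> snd p" using ex2 c' by blast
    then have v': "?S c' v' \<and> v' \<noteq> snd p" unfolding v'_def by (rule someI_ex)
    have "nxt p = (c', v')" unfolding nxt_def c'_def v'_def Let_def by simp
    then show ?thesis using c' v' unfolding P_def by simp
  qed
  define sq where "sq t = (nxt ^^ t) (j0, v0)" for t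
  have Psq: "P (sq t)" for t
    by (induction t) (auto simp: sq_def P_def j0 v0 nxt_prop[unfolded P_def])
  define c where "c t = fst (sq t)" for t
  define v where "v t = snd (sq t)" for t
  have sqS: "sq (Suc t) = nxt (sq t)" for t unfolding sq_def by simp
  have cT: "c t \<in> T" for t using Psq unfolding P_def c_def by blast
  have Sv: "?S (c t) (v t)" for t using Psq unfolding P_def c_def v_def by blast
  have te1: "?te (c t) (v t)" for t using Sv unfolding Sfr_def by blast
  have frv: "fractional_var n x (v t)" for t using Sv unfolding Sfr_def by blast
  have te2: "?te (c (Suc t)) (v t)" for t using nxt_prop[OF Psq[of t]] sqS unfolding c_def v_def by simp
  have cne: "c (Suc t) \<noteq> c t" for t using nxt_prop[OF Psq[of t]] sqS unfolding c_def v_def by simp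
  have vne: "v (Suc t) \<noteq> v t" for t using nxt_prop[OF Psq[of t]] sqS unfolding c_def v_def by simp
  have cm: "c t < m" for t using te1 unfolding tanner_edge_def by blast
  have vn: "v t < n" for t using te1 unfolding tanner_edge_def by blast
  define u where "u s = (if even s then 2 * c (s div 2) else 2 * v (s div 2) + 1)" for s
  have ub: "u s < 2*(m+n)+2" for s using cm[of "s div 2"] vn[of "s div 2"] unfolding u_def by auto
  have "\<not> inj_on u {..<2*(m+n)+3}"
  proof
    assume "inj_on u {..<2*(m+n)+3}"
    moreover have "u ` {..<2*(m+n)+3} \<subseteq> {..<2*(m+n)+2}" using ub by auto
    ultimately have "card {..<2*(m+n)+3} \<le> card {..<2*(m+n)+2}"
      by (intro card_inj_on_le) auto
    then show False by simp
  qed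
  then obtain i0 k0 where ik0: "i0 \<noteq> k0" "u i0 = u k0" unfolding inj_on_def by blast
  have exk: "\<exists>k i. i < k \<and> u i = u k"
  proof (cases "i0 < k0")
    case True
    then show ?thesis using ik0 by blast
  next
    case False
    then have "k0 < i0" using ik0 by simp
    then show ?thesis using ik0 by (intro exI[of _ i0] exI[of _ k0]) simp
  qed
  define k where "k = (LEAST k. \<exists>i<k. u i = u k)"
  have "\<exists>i<k. u i = u k" unfolding k_def by (rule LeastI_ex) (rule exk)
  then obtain i where ik: "i < k" "u i = u k" by blast
  have minim: "u p \<noteq> u q" if "p < q" "q < k" for p q
    using not_less_Least[of q "\<lambda>k. \<exists>i<k. u i = u k"] that unfolding k_def by blast
  have window: "u p \<noteq> u q" if "i \<le> p" "p < q" "q \<le> k" "\<not> (p = i \<and> q = k)" for p q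
  proof (cases "q = k")
    case True
    then have "i < p" using that by auto
    then show ?thesis using minim[of i p] that ik True by auto
  next
    case False
    then show ?thesis using minim that by auto
  qed
  have upar: "even (u s) = even s" for s unfolding u_def by auto
  have par: "even i = even k" using upar[of i] upar[of k] ik(2) by simp
  have n2: "k \<noteq> i + 2"
  proof
    assume k2: "k = i + 2"
    show False
    proof (cases "even i")
      case True
      then have "u k = 2 * c (Suc (i div 2))" "u i = 2 * c (i div 2)" using k2 unfolding u_def by auto
      then show False using ik cne by simp
    next
      case False
      then have "u k = 2 * v (Suc (i div 2)) + 1" "u i = 2 * v (i div 2) + 1" using k2 unfolding u_def by auto
      then show False using ik vne by simp
    qed
  qed
  have k4: "i + 4 \<le> k" using par ik n2 by presburger
  define s where "s = (i+1) div 2"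
  define L where "L = k div 2 - i div 2"
  note af = arith_facts[OF par k4 s_def L_def]
  define cs where "cs = map (\<lambda>t. c (s+t)) [0..<L]"
  define vs where "vs = map (\<lambda>t. v (s+t)) [0..<L]"
  have ucs: "u (2*a) = 2 * c a" for a unfolding u_def by simp
  have uvs: "u (2*a+1) = 2 * v a + 1" for a unfolding u_def by simp
  have cdist: "c (s+t1) \<noteq> c (s+t2)" if "t1 < t2" "t2 < L" for t1 t2
  proof -
    have "u (2*(s+t1)) \<noteq> u (2*(s+t2))"
      using window[of "2*(s+t1)" "2*(s+t2)"] af(2)[of t1] af(2)[of t2] that by auto
    then show ?thesis unfolding ucs by simp
  qed
  have vdist: "v (s+t1) \<noteq> v (s+t2)" if "t1 < t2" "t2 < L" for t1 t2
  proof -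
    have "u (2*(s+t1)+1) \<noteq> u (2*(s+t2)+1)"
      using window[of "2*(s+t1)+1" "2*(s+t2)+1"] af(3)[of t1] af(3)[of t2] that by auto
    then show ?thesis unfolding uvs by simp
  qed
  have close: "?te (c s) (v (s + L - 1))"
  proof (cases "even i")
    case True
    then have "u i = 2 * c (i div 2)" "u k = 2 * c (k div 2)" using par unfolding u_def by auto
    then have "c (i div 2) = c (k div 2)" using ik by simp
    moreover have e: "s = i div 2" "s + L = k div 2" using af(4)[OF True] by auto
    ultimately have "c s = c (s + L)" by (simp only: e)
    moreover have "s + L = Suc (s + L - 1)" using af(1) by simp
    ultimately show ?thesis using te2[of "s + L - 1"] by simp
  next
    case False
    then have "u i = 2 * v (i div 2) + 1" "u k = 2 * v (k div 2) + 1" using par unfolding u_def by auto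
    then have "v (i div 2) = v (k div 2)" using ik by simp
    moreover have e: "s + L - 1 = k div 2" using af(5)[OF False] by auto
    ultimately have "v (i div 2) = v (s + L - 1)" by (simp only: e)
    moreover have "s = Suc (i div 2)" using af(5)[OF False] by simp
    ultimately show ?thesis using te2[of "i div 2"] by simp
  qed
  have "fractional_cycle H m n x cs vs"
    unfolding fractional_cycle_def
  proof (intro conjI allI impI)
    show "length cs = length vs" "2 \<le> length cs" unfolding cs_def vs_def using af(1) by auto
    show "distinct cs" unfolding cs_def distinct_conv_nth
    proof (intro allI impI)
      fix a b assume ab: "a < length (map (\<lambda>t. c (s + t)) [0..<L])" "b < length (map (\<lambda>t. c (s + t)) [0..<L])" "a \<noteq> b"
      then have "a < L" "b < L" by auto
      then show "map (\<lambda>t. c (s + t)) [0..<L] ! a \<noteq> map (\<lambda>t. c (s + t)) [0..<L] ! b"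
        using cdist[of a b] cdist[of b a] ab(3) by (cases "a < b") auto
    qed
    show "distinct vs" unfolding vs_def distinct_conv_nth
    proof (intro allI impI)
      fix a b assume ab: "a < length (map (\<lambda>t. v (s + t)) [0..<L])" "b < length (map (\<lambda>t. v (s + t)) [0..<L])" "a \<noteq> b"
      then have "a < L" "b < L" by auto
      then show "map (\<lambda>t. v (s + t)) [0..<L] ! a \<noteq> map (\<lambda>t. v (s + t)) [0..<L] ! b"
        using vdist[of a b] vdist[of b a] ab(3) by (cases "a < b") auto
    qed
    fix t assume t: "t < length cs"
    then have tL: "t < L" unfolding cs_def by simp
    show "fractional_var n x (vs ! t)" unfolding vs_def using tL frv by simp
    show "?te (cs ! t) (vs ! t)" unfolding vs_def cs_def using tL te1 by simp
    show "?te (cs ! ((t + 1) mod length cs)) (vs ! t)"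
    proof (cases "t + 1 < L")
      case True
      then show ?thesis unfolding vs_def cs_def using te2[of "s+t"] by simp
    next
      case False
      then have "t = L - 1" using tL by simp
      moreover have "t + 1 = L" using False tL by simp
      then have "(t + 1) mod L = 0" by simp
      ultimately show ?thesis unfolding vs_def cs_def using close af(1) by simp
    qed
  qed
  moreover have "set cs \<subseteq> T" unfolding cs_def using cT by auto
  ultimately show False using nocyc by blast
qed



theorem theorem3:
  fixes H :: "nat \<Rightarrow> nat \<Rightarrow> bool" and m n :: nat and x :: "nat \<Rightarrow> real" and T :: "nat set"
  assumes "fundamental_polytope H m n x"
    and "T \<subseteq> {..<m}"
    and "cut_generating_collection H m n x T"
  shows "\<exists>cs vs. fractional_cycle H m n x cs vs \<and> set cs \<subseteq> T"
proof (rule ccontr)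
  assume nc: "\<not> ?thesis"
  have fT: "finite T" using assms(2) finite_subset by blast
  have lf: "\<forall>T'. T' \<subseteq> T \<longrightarrow> T' \<noteq> {} \<longrightarrow> (\<exists>j\<in>T'. \<forall>u w. Sfr H m n x T' j u \<and> Sfr H m n x T' j w \<longrightarrow> u = w)"
  proof (intro allI impI)
    fix T' assume "T' \<subseteq> T" "T' \<noteq> {}"
    moreover have "\<not> (\<exists>cs vs. fractional_cycle H m n x cs vs \<and> set cs \<subseteq> T')"
      using nc \<open>T' \<subseteq> T\<close> by blast
    ultimately show "\<exists>j\<in>T'. \<forall>u w. Sfr H m n x T' j u \<and> Sfr H m n x T' j w \<longrightarrow> u = w"
      using leaf[of T' m H n x] assms(2) by blast
  qed
  have "parity_constraints_hold (redundant_nbhd H m n T) x"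
    using main[OF assms(1) fT assms(2) lf] .
  then show False using assms(3)
    unfolding cut_generating_collection_def generates_cut_def parity_constraints_hold_def
    by (meson not_le)
qed

end
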